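(* Let $(\mathscr X,d)$ be a metric space and let $(\mu_n)_{n\geqslant 1}$ be a sequence of positive Borel measures on $\mathscr X$ such that $\mu_n(\mathscr X)\leqslant M$ for all $n$, where $M$ is a positive constant. Denote by $q_n(t)=\sup_{x\in\mathscr X}\mu_n(B(x,t))$ the concentration function of $\mu_n$. Assume that there is a function $q$ such that $q_n(t)\to q(t)$ as $n\to\infty$ for a.e. $t>0$, and that $\lim_{t\to\infty}q(t)=\alpha>0$. Fix an increasing sequence $t_n\to\infty$ such that $q_n(t_n)\to\alpha$. Then there exist a subsequence $(\mu_{n_k})_{k\geqslant1}$, a sequence of points $(x_k)_{k\geqslant1}\subset\mathscr X$ and a sequence $(R_k)_{k\geqslant1}$ of positive numbers such that $R_k\leqslant t_{n_k}$, $R_k\to\infty$, $\mu_{n_k}(B(x_k,R_k))\to\alpha$ as $k\to\infty$, and the sequence of measures $\big({\mu_{n_k}}_{|B(x_k,R_k)}\big)_{k\geqslant1}$ concentrates around $(x_k)_{k\geqslant1}$.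
   Context: $B(x,r)$ denotes the open ball of center $x$ and radius $r$ in $\mathscr X$. For a Borel measure $\mu$ and a Borel set $A$, the restriction $\mu_{|A}$ is defined by $\mu_{|A}(E)=\mu(A\cap E)$. A sequence $(\nu_k)_{k\geqslant1}$ of positive Borel measures on $\mathscr X$ concentrates around a sequence of points $(x_k)_{k\geqslant1}\subset\mathscr X$ if for every $\varepsilon>0$ there exists $R_\varepsilon>0$ such that $\nu_k(\mathscr X\setminus B(x_k,R_\varepsilon))<\varepsilon$ for all $k\geqslant1$. *)

theory Defs
  imports "HOL-Analysis.Analysis"
begin

definition restrict_measure :: "'a measure \<Rightarrow> 'a set \<Rightarrow> 'a measure" where
  "restrict_measure \<mu> A = density \<mu> (indicator A)"

definition conc_fun :: "('a::metric_space) measure \<Rightarrow> real \<Rightarrow> real" where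
  "conc_fun \<mu> t = (SUP x. measure \<mu> (ball x t))"

definition concentrates_around :: "(nat \<Rightarrow> ('a::metric_space) measure) \<Rightarrow> (nat \<Rightarrow> 'a) \<Rightarrow> bool" where
  "concentrates_around \<nu> x \<longleftrightarrow>
     (\<forall>\<epsilon>>0. \<exists>R>0. \<forall>k. emeasure (\<nu> k) (space (\<nu> k) - ball (x k) R) < ennreal \<epsilon>)"

end

theory Submission
  imports Defs "HOL-Library.Diagonal_Subsequence"
begin

lemma restr: assumes "B \<in> sets \<mu>" "A \<in> sets \<mu>"
  shows "emeasure (restrict_measure \<mu> B) A = emeasure \<mu> (B \<inter> A)"
proof -
  have "emeasure (restrict_measure \<mu> B) A = (\<integral>\<^sup>+x. indicator B x * indicator A x \<partial>\<mu>)"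
    unfolding restrict_measure_def using assms by (simp add: emeasure_density)
  also have "\<dots> = (\<integral>\<^sup>+x. indicator (B \<inter> A) x \<partial>\<mu>)"
    by (intro nn_integral_cong) (simp split: split_indicator)
  also have "\<dots> = emeasure \<mu> (B \<inter> A)" using assms by simp
  finally show ?thesis .
qed

lemma ball_incl: "dist a z < r1 \<Longrightarrow> dist b z < r2 \<Longrightarrow> dist b y < r2 \<Longrightarrow> dist a y < r1 + 2 * r2"
  for a b y z :: "'a::metric_space"
  by metric

theorem lemma1p3:
  fixes \<mu> :: "nat \<Rightarrow> ('a::metric_space) measure"
    and M \<alpha> :: real and q :: "real \<Rightarrow> real" and t :: "nat \<Rightarrow> real"
  assumes borel: "\<And>n. sets (\<mu> n) = sets borel"
    and M_pos: "M > 0"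
    and bounded: "\<And>n. emeasure (\<mu> n) UNIV \<le> ennreal M"
    and q_lim: "AE s in lborel. s > 0 \<longrightarrow> (\<lambda>n. conc_fun (\<mu> n) s) \<longlonglongrightarrow> q s"
    and q_infty: "(q \<longlongrightarrow> \<alpha>) at_top"
    and alpha_pos: "\<alpha> > 0"
    and t_mono: "incseq t"
    and t_infty: "filterlim t at_top sequentially"
    and t_conc: "(\<lambda>n. conc_fun (\<mu> n) (t n)) \<longlonglongrightarrow> \<alpha>"
  shows "\<exists>r :: nat \<Rightarrow> nat. \<exists>x :: nat \<Rightarrow> 'a. \<exists>R :: nat \<Rightarrow> real.
           strict_mono r \<and>
           (\<forall>k. 0 < R k \<and> R k \<le> t (r k)) \<and>
           filterlim R at_top sequentially \<and>
           (\<lambda>k. measure (\<mu> (r k)) (ball (x k) (R k))) \<longlonglongrightarrow> \<alpha> \<and>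
           concentrates_around (\<lambda>k. restrict_measure (\<mu> (r k)) (ball (x k) (R k))) x"
proof -
  have sp: "space (\<mu> n) = UNIV" for n
    using sets_eq_imp_space_eq[OF borel[of n]] by simp
  have ball_sets: "ball x r \<in> sets (\<mu> n)" for x r n
    using borel[of n] by simp
  have fin: "finite_measure (\<mu> n)" for n
    using bounded[of n] sp[of n] by (intro finite_measureI) (auto simp: top_unique)
  have muniv: "measure (\<mu> n) UNIV \<le> M" for n
  proof -
    have "ennreal (measure (\<mu> n) UNIV) \<le> ennreal M"
      using bounded[of n] finite_measure.emeasure_eq_measure[OF fin[of n], of UNIV] by simp
    then show ?thesis using M_pos by (simp add: ennreal_le_iff)
  qed
  have mle: "measure (\<mu> n) A \<le> M" if "A \<in> sets (\<mu> n)" for A n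
  proof -
    have "measure (\<mu> n) A \<le> measure (\<mu> n) UNIV"
      using finite_measure.finite_measure_mono[OF fin[of n], of A UNIV] sp[of n]
      by (metis sets.top subset_UNIV)
    then show ?thesis using muniv[of n] by simp
  qed
  have bdd: "bdd_above (range (\<lambda>x. measure (\<mu> n) (ball x r)))" for n r
    using mle ball_sets by (intro bdd_aboveI[of _ M]) auto
  have Qge: "measure (\<mu> n) (ball x r) \<le> conc_fun (\<mu> n) r" for n x r
    unfolding conc_fun_def by (rule cSUP_upper[OF _ bdd]) simp
  have Qgt: "\<exists>x. c < measure (\<mu> n) (ball x r)" if "c < conc_fun (\<mu> n) r" for c n r
    using that unfolding conc_fun_def by (simp add: less_cSUP_iff[OF _ bdd])
  have scale: "\<exists>s>0. \<exists>A. \<forall>n\<ge>A. \<alpha> - e < conc_fun (\<mu> n) s" if e: "e > 0" for e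
  proof -
    have "\<forall>\<^sub>F s in at_top. \<alpha> - e < q s"
      using order_tendstoD(1)[OF q_infty, of "\<alpha> - e"] e by simp
    then obtain S0 where S0: "\<And>s. s \<ge> S0 \<Longrightarrow> \<alpha> - e < q s"
      by (auto simp: eventually_at_top_linorder)
    define a where "a = max S0 1"
    obtain N where N: "{x \<in> space lborel. \<not> (x > 0 \<longrightarrow> (\<lambda>n. conc_fun (\<mu> n) x) \<longlonglongrightarrow> q x)} \<subseteq> N"
      "emeasure lborel N = 0" "N \<in> sets lborel"
      using AE_E[OF q_lim] by blast
    have "\<exists>s\<in>{a<..<a+1}. s > 0 \<longrightarrow> (\<lambda>n. conc_fun (\<mu> n) s) \<longlonglongrightarrow> q s"
    proof (rule ccontr)
      assume "\<not> ?thesis"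
      then have "{a<..<a+1} \<subseteq> N" using N(1) by auto
      then have "emeasure lborel {a<..<a+1} \<le> emeasure lborel N"
        using N(3) by (intro emeasure_mono) auto
      then show False using N(2) by simp
    qed
    then obtain s where s: "a < s" "s < a + 1" "s > 0 \<longrightarrow> (\<lambda>n. conc_fun (\<mu> n) s) \<longlonglongrightarrow> q s"
      by auto
    have s0: "s > 0" using s(1) unfolding a_def by simp
    have qs: "\<alpha> - e < q s" using S0 s(1) unfolding a_def by simp
    have "\<forall>\<^sub>F n in sequentially. \<alpha> - e < conc_fun (\<mu> n) s"
      using order_tendstoD(1)[OF s(3)[rule_format, OF s0] qs] .
    then show ?thesis using s0 by (auto simp: eventually_sequentially)
  qed
  define \<delta> where "\<delta> i = \<alpha> / (4 * real (Suc i))" for i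
  have \<delta>pos: "\<delta> i > 0" for i using alpha_pos by (simp add: \<delta>_def)
  have \<delta>le: "\<delta> i \<le> \<alpha> / 4" for i unfolding \<delta>_def
    by (rule divide_left_mono) (use alpha_pos in auto)
  have "\<forall>i. \<exists>s>0. \<exists>A. \<forall>n\<ge>A. \<alpha> - \<delta> i < conc_fun (\<mu> n) s"
    using scale \<delta>pos by blast
  then obtain s where s: "\<And>i. s i > 0" "\<And>i. \<exists>A. \<forall>n\<ge>A. \<alpha> - \<delta> i < conc_fun (\<mu> n) (s i)"
    by metis
  then obtain A where A: "\<And>i n. n \<ge> A i \<Longrightarrow> \<alpha> - \<delta> i < conc_fun (\<mu> n) (s i)"
    by metis
  define g where "g n i = (SOME x. \<alpha> - \<delta> i < measure (\<mu> n) (ball x (s i)))" for n i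
  have gprop: "\<alpha> - \<delta> i < measure (\<mu> n) (ball (g n i) (s i))" if "n \<ge> A i" for n i
    unfolding g_def by (rule someI_ex[OF Qgt[OF A[OF that]]])
  define near where "near n i j \<longleftrightarrow> ball (g n i) (s i) \<inter> ball (g n j) (s j) \<noteq> {}" for n i j
  define Pd where "Pd m r \<longleftrightarrow> (\<exists>b. \<forall>\<^sub>F k in sequentially.
      near (r k) (fst (prod_decode m)) (snd (prod_decode m)) = b)" for m and r :: "nat \<Rightarrow> nat"
  interpret D: subseqs Pd
  proof
    fix m and sq :: "nat \<Rightarrow> nat" assume sq: "strict_mono sq"
    define i where "i = fst (prod_decode m)"
    define j where "j = snd (prod_decode m)"
    have "infinite {k. near (sq k) i j} \<or> infinite {k. \<not> near (sq k) i j}"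
    proof (rule ccontr)
      assume "\<not> ?thesis"
      then have "finite ({k. near (sq k) i j} \<union> {k. \<not> near (sq k) i j})" by auto
      moreover have "{k. near (sq k) i j} \<union> {k. \<not> near (sq k) i j} = UNIV" by auto
      ultimately show False by simp
    qed
    then obtain b where "infinite {k. near (sq k) i j = b}"
    proof
      assume "infinite {k. near (sq k) i j}" then show ?thesis using that[of True] by simp
    next
      assume "infinite {k. \<not> near (sq k) i j}" then show ?thesis using that[of False] by simp
    qed
    from infinite_enumerate[OF this]
    obtain r' :: "nat \<Rightarrow> nat" where r': "strict_mono r'" "\<And>n. r' n \<in> {k. near (sq k) i j = b}"
      by blast
    have "Pd m (sq \<circ> r')"
      unfolding Pd_def i_def[symmetric] j_def[symmetric] using r'(2) by (intro exI[of _ b]) auto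
    then show "\<exists>r'. strict_mono r' \<and> Pd m (sq \<circ> r')" using r'(1) by blast
  qed
  define d where "d = D.diagseq"
  have d_mono: "strict_mono d" unfolding d_def by (rule D.subseq_diagseq)
  have d_ge: "k \<le> d k" for k using seq_suble[OF d_mono] .
  have dconv: "\<exists>b. \<forall>\<^sub>F k in sequentially. near (d k) i j = b" for i j
  proof -
    define m where "m = prod_encode (i, j)"
    have "Pd m (D.diagseq \<circ> (+) (Suc m))"
    proof (rule D.diagseq_holds)
      fix r sq :: "nat \<Rightarrow> nat" and n :: nat assume "strict_mono r" "Pd n sq"
      then obtain b where "\<forall>\<^sub>F k in sequentially.
          near (sq k) (fst (prod_decode n)) (snd (prod_decode n)) = b" unfolding Pd_def by blast
      from eventually_subseq[of r "\<lambda>k. near (sq k) (fst (prod_decode n)) (snd (prod_decode n)) = b",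
          OF \<open>strict_mono r\<close> this]
      show "Pd n (sq \<circ> r)" unfolding Pd_def by auto
    qed
    then obtain b where b: "\<forall>\<^sub>F k in sequentially. near (d (Suc m + k)) i j = b"
      unfolding Pd_def m_def d_def by auto
    then obtain K where K: "\<And>k. k \<ge> K \<Longrightarrow> near (d (Suc m + k)) i j = b"
      by (auto simp: eventually_sequentially)
    have "\<forall>\<^sub>F k in sequentially. near (d k) i j = b"
      unfolding eventually_sequentially
    proof (intro exI[of _ "K + Suc m"] allI impI)
      fix k assume "K + Suc m \<le> k"
      then show "near (d k) i j = b" using K[of "k - Suc m"] by simp
    qed
    then show ?thesis by blast
  qed
  define Near where "Near i j \<longleftrightarrow> (\<forall>\<^sub>F k in sequentially. near (d k) i j)" for i j
  have NearE: "\<forall>\<^sub>F k in sequentially. \<not> near (d k) i j" if "\<not> Near i j" for i j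
  proof -
    obtain b where b: "\<forall>\<^sub>F k in sequentially. near (d k) i j = b" using dconv by blast
    show ?thesis
    proof (cases b)
      case True
      then show ?thesis using b that unfolding Near_def by simp
    next
      case False
      then show ?thesis using b by simp
    qed
  qed
  have near_sym: "near n i j = near n j i" for n i j
    unfolding near_def by (simp add: Int_commute)
  have Near_sym: "Near i j = Near j i" for i j
    unfolding Near_def using near_sym by simp
  define N where "N = nat \<lceil>2 * M / \<alpha>\<rceil>"
  have N_ge: "2 * M / \<alpha> \<le> real N" unfolding N_def by linarith
  have NM: "M < real (Suc N) * (\<alpha> / 2)"
  proof -
    have "2 * M \<le> real N * \<alpha>" using N_ge alpha_pos by (simp add: divide_le_eq)
    then show ?thesis using alpha_pos by (simp add: algebra_simps)
  qed
  have noindep: False if F: "finite F" "card F = Suc N" "\<forall>a\<in>F. \<forall>b\<in>F. a \<noteq> b \<longrightarrow> \<not> Near a b" for F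
  proof -
    have ev1: "\<forall>\<^sub>F k in sequentially. \<forall>p\<in>{p\<in>F\<times>F. fst p \<noteq> snd p}. \<not> near (d k) (fst p) (snd p)"
      using F by (intro eventually_ball_finite) (auto intro: NearE)
    have ev2: "\<forall>\<^sub>F k in sequentially. \<forall>a\<in>F. A a \<le> d k"
    proof (intro eventually_ball_finite ballI)
      fix a show "\<forall>\<^sub>F k in sequentially. A a \<le> d k"
        unfolding eventually_sequentially using d_ge le_trans by blast
    qed (use F in auto)
    obtain k where k1: "\<forall>p\<in>{p\<in>F\<times>F. fst p \<noteq> snd p}. \<not> near (d k) (fst p) (snd p)"
      and k2: "\<forall>a\<in>F. A a \<le> d k"
      using eventually_conj[OF ev1 ev2] by (auto simp: eventually_sequentially)
    define n where "n = d k"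
    have disj: "disjoint_family_on (\<lambda>a. ball (g n a) (s a)) F"
      unfolding disjoint_family_on_def
    proof (intro ballI impI)
      fix a b assume "a \<in> F" "b \<in> F" "a \<noteq> b"
      then have "\<not> near n a b" using k1 unfolding n_def by auto
      then show "ball (g n a) (s a) \<inter> ball (g n b) (s b) = {}" unfolding near_def by simp
    qed
    have "measure (\<mu> n) (\<Union>a\<in>F. ball (g n a) (s a)) = (\<Sum>a\<in>F. measure (\<mu> n) (ball (g n a) (s a)))"
      using finite_measure.finite_measure_finite_Union[OF fin F(1) _ disj] ball_sets by auto
    moreover have "measure (\<mu> n) (\<Union>a\<in>F. ball (g n a) (s a)) \<le> M"
      using ball_sets F(1) by (intro mle sets.finite_UN) auto
    moreover have "(\<Sum>a\<in>F. \<alpha> / 2) < (\<Sum>a\<in>F. measure (\<mu> n) (ball (g n a) (s a)))"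
    proof (rule sum_strict_mono)
      show "F \<noteq> {}" using F(2) by auto
      fix a assume "a \<in> F"
      then have "\<alpha> - \<delta> a < measure (\<mu> n) (ball (g n a) (s a))"
        using gprop k2 unfolding n_def by auto
      then show "\<alpha> / 2 < measure (\<mu> n) (ball (g n a) (s a))" using \<delta>le[of a] alpha_pos by linarith
    qed (use F in auto)
    moreover have "(\<Sum>a\<in>F. \<alpha> / 2) = real (Suc N) * (\<alpha> / 2)" using F(2) by simp
    ultimately show False using NM by linarith
  qed
  have "\<exists>i0. infinite {j. Near i0 j}"
  proof (rule ccontr)
    assume "\<not> ?thesis"
    then have finN: "\<And>i. finite {j. Near i j}" by auto
    have "\<exists>F. finite F \<and> card F = m \<and> (\<forall>a\<in>F. \<forall>b\<in>F. a \<noteq> b \<longrightarrow> \<not> Near a b)" for m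
    proof (induction m)
      case 0 show ?case by (intro exI[of _ "{}"]) auto
    next
      case (Suc m)
      then obtain F where F: "finite F" "card F = m" "\<forall>a\<in>F. \<forall>b\<in>F. a \<noteq> b \<longrightarrow> \<not> Near a b"
        by blast
      have "finite (F \<union> (\<Union>a\<in>F. {j. Near a j}))" using F(1) finN by auto
      then obtain i where i: "i \<notin> F \<union> (\<Union>a\<in>F. {j. Near a j})"
        using ex_new_if_finite[OF infinite_UNIV_nat] by blast
      show ?case
        by (intro exI[of _ "insert i F"]) (use F i Near_sym in auto)
    qed
    then show False using noindep by blast
  qed
  then obtain i0 where I_inf: "infinite {j. Near i0 j}" by blast
  define I where "I = {j. Near i0 j}"
  have KF: "\<forall>\<^sub>F k in sequentially. \<alpha> - \<delta> i < measure (\<mu> (d k)) (ball (g (d k) i0) (s i0 + 2 * s i))"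
    if "i \<in> I" for i
  proof -
    have e1: "\<forall>\<^sub>F k in sequentially. near (d k) i0 i" using that unfolding I_def Near_def by simp
    have e2: "\<forall>\<^sub>F k in sequentially. A i \<le> d k"
      unfolding eventually_sequentially using d_ge le_trans by blast
    show ?thesis
    proof (rule eventually_mono[OF eventually_conj[OF e1 e2]])
      fix k assume H: "near (d k) i0 i \<and> A i \<le> d k"
      define n where "n = d k"
      obtain z where z: "z \<in> ball (g n i0) (s i0)" "z \<in> ball (g n i) (s i)"
        using H unfolding near_def n_def by auto
      have sub: "ball (g n i) (s i) \<subseteq> ball (g n i0) (s i0 + 2 * s i)"
      proof
        fix y assume "y \<in> ball (g n i) (s i)"
        then show "y \<in> ball (g n i0) (s i0 + 2 * s i)"
          using z ball_incl[of "g n i0" z "s i0" "g n i" "s i" y] by (simp add: dist_commute)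
      qed
      have "measure (\<mu> n) (ball (g n i) (s i)) \<le> measure (\<mu> n) (ball (g n i0) (s i0 + 2 * s i))"
        using finite_measure.finite_measure_mono[OF fin sub ball_sets] .
      moreover have "\<alpha> - \<delta> i < measure (\<mu> n) (ball (g n i) (s i))"
        using gprop H unfolding n_def by auto
      ultimately show "\<alpha> - \<delta> i < measure (\<mu> (d k)) (ball (g (d k) i0) (s i0 + 2 * s i))"
        unfolding n_def by linarith
    qed
  qed
  have bigI: "\<exists>i\<in>I. \<delta> i < e" if e: "e > 0" for e
  proof -
    obtain m :: nat where m: "\<alpha> / e < real m" using reals_Archimedean2 by blast
    obtain i where i: "i \<in> I" "m \<le> i"
      using I_inf unfolding I_def infinite_nat_iff_unbounded_le by blast
    have "\<alpha> < e * real m" using m e by (simp add: divide_less_eq mult.commute)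
    also have "\<dots> \<le> e * (4 * real (Suc i))" using i(2) e by (intro mult_left_mono) auto
    finally have "\<delta> i < e" unfolding \<delta>_def by (simp add: divide_less_eq mult.commute)
    then show ?thesis using i(1) by blast
  qed
  obtain N0 where N0: "\<And>n. n \<ge> N0 \<Longrightarrow> 0 < t n"
  proof -
    have "\<forall>\<^sub>F n in sequentially. 1 \<le> t n" using t_infty unfolding filterlim_at_top by blast
    then obtain N0 where "\<And>n. n \<ge> N0 \<Longrightarrow> 1 \<le> t n" by (auto simp: eventually_sequentially)
    then show ?thesis using that by fastforce
  qed
  define r where "r k = d (k + N0)" for k
  define x where "x k = g (r k) i0" for k
  define R where "R k = t (r k)" for k
  have r_mono: "strict_mono r" unfolding r_def strict_mono_def
    using strict_monoD[OF d_mono] by simp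
  have R_pos: "0 < R k" for k
    unfolding R_def r_def using N0 d_ge[of "k + N0"] by simp
  have R_lim: "filterlim R at_top sequentially"
    unfolding R_def using filterlim_compose[OF t_infty filterlim_subseq[OF r_mono]] .
  have R_big: "\<forall>\<^sub>F k in sequentially. c \<le> R k" for c
    using R_lim unfolding filterlim_at_top by blast
  have Qr: "(\<lambda>k. conc_fun (\<mu> (r k)) (R k)) \<longlonglongrightarrow> \<alpha>"
    using LIMSEQ_subseq_LIMSEQ[OF t_conc r_mono] unfolding R_def o_def .
  have KF': "\<forall>\<^sub>F k in sequentially. \<alpha> - \<delta> i < measure (\<mu> (r k)) (ball (x k) (s i0 + 2 * s i))"
    if "i \<in> I" for i
    using sequentially_offset[OF KF[OF that], of N0] unfolding x_def r_def .
  have mono_ball: "measure (\<mu> n) (ball c a) \<le> measure (\<mu> n) (ball c b)" if "a \<le> b" for n c a b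
    using finite_measure.finite_measure_mono[OF fin _ ball_sets] subset_ball[OF that] by blast
  have conv: "(\<lambda>k. measure (\<mu> (r k)) (ball (x k) (R k))) \<longlonglongrightarrow> \<alpha>"
  proof (rule order_tendstoI)
    fix a assume a: "a < \<alpha>"
    obtain i where i: "i \<in> I" "\<delta> i < \<alpha> - a" using bigI[of "\<alpha> - a"] a by auto
    show "\<forall>\<^sub>F k in sequentially. a < measure (\<mu> (r k)) (ball (x k) (R k))"
    proof (rule eventually_mono[OF eventually_conj[OF KF'[OF i(1)] R_big[of "s i0 + 2 * s i"]]])
      fix k assume H: "\<alpha> - \<delta> i < measure (\<mu> (r k)) (ball (x k) (s i0 + 2 * s i)) \<and> s i0 + 2 * s i \<le> R k"
      then show "a < measure (\<mu> (r k)) (ball (x k) (R k))"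
        using mono_ball[of "s i0 + 2 * s i" "R k" "r k" "x k"] i(2) by linarith
    qed
  next
    fix a assume a: "\<alpha> < a"
    show "\<forall>\<^sub>F k in sequentially. measure (\<mu> (r k)) (ball (x k) (R k)) < a"
      using order_tendstoD(2)[OF Qr a]
      by (rule eventually_mono) (use Qge order.strict_trans1 in blast)
  qed
  have conc: "concentrates_around (\<lambda>k. restrict_measure (\<mu> (r k)) (ball (x k) (R k))) x"
    unfolding concentrates_around_def
  proof (intro allI impI)
    fix e :: real assume e: "e > 0"
    obtain i where i: "i \<in> I" "\<delta> i < e / 2" using bigI[of "e / 2"] e by auto
    define \<rho>i where "\<rho>i = s i0 + 2 * s i"
    have \<rho>i_pos: "\<rho>i > 0" unfolding \<rho>i_def using s(1)[of i0] s(1)[of i] by simp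
    have ev: "\<forall>\<^sub>F k in sequentially. \<alpha> - \<delta> i < measure (\<mu> (r k)) (ball (x k) \<rho>i)
        \<and> conc_fun (\<mu> (r k)) (R k) < \<alpha> + e / 2 \<and> \<rho>i \<le> R k"
    proof -
      have q2: "\<forall>\<^sub>F k in sequentially. conc_fun (\<mu> (r k)) (R k) < \<alpha> + e / 2"
        using order_tendstoD(2)[OF Qr, of "\<alpha> + e / 2"] e by simp
      show ?thesis unfolding \<rho>i_def
        using eventually_conj[OF KF'[OF i(1)] eventually_conj[OF q2 R_big[of "s i0 + 2 * s i"]]] .
    qed
    then obtain K1 where K1: "\<And>k. k \<ge> K1 \<Longrightarrow> \<alpha> - \<delta> i < measure (\<mu> (r k)) (ball (x k) \<rho>i)
        \<and> conc_fun (\<mu> (r k)) (R k) < \<alpha> + e / 2 \<and> \<rho>i \<le> R k"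
      by (auto simp: eventually_sequentially)
    define \<rho> where "\<rho> = \<rho>i + (\<Sum>j<K1. \<bar>R j\<bar>)"
    have \<rho>_ge: "\<rho>i \<le> \<rho>" unfolding \<rho>_def by (simp add: sum_nonneg)
    have \<rho>_pos: "\<rho> > 0" using \<rho>i_pos \<rho>_ge by simp
    have "\<forall>k. emeasure (restrict_measure (\<mu> (r k)) (ball (x k) (R k)))
        (space (restrict_measure (\<mu> (r k)) (ball (x k) (R k))) - ball (x k) \<rho>) < ennreal e"
    proof
      fix k
      define n where "n = r k"
      have spr: "space (restrict_measure (\<mu> n) (ball (x k) (R k))) = UNIV"
        unfolding restrict_measure_def using sp by simp
      have cs: "UNIV - ball (x k) \<rho> \<in> sets (\<mu> n)"
        using sets.compl_sets[OF ball_sets[of "x k" \<rho> n]] sp[of n] by simp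
      have em: "emeasure (restrict_measure (\<mu> n) (ball (x k) (R k))) (UNIV - ball (x k) \<rho>)
          = emeasure (\<mu> n) (ball (x k) (R k) \<inter> (UNIV - ball (x k) \<rho>))"
        by (rule restr[OF ball_sets cs])
      have "emeasure (\<mu> n) (ball (x k) (R k) \<inter> (UNIV - ball (x k) \<rho>)) < ennreal e"
      proof (cases "k < K1")
        case True
        have "R k \<le> (\<Sum>j<K1. \<bar>R j\<bar>)"
          using member_le_sum[of k "{..<K1}" "\<lambda>j. \<bar>R j\<bar>"] True by auto
        then have "R k \<le> \<rho>" unfolding \<rho>_def using \<rho>i_pos by simp
        then have "ball (x k) (R k) \<inter> (UNIV - ball (x k) \<rho>) = {}" using subset_ball by blast
        then show ?thesis using e by simp
      next
        case False
        then have H: "\<alpha> - \<delta> i < measure (\<mu> n) (ball (x k) \<rho>i)"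
          "conc_fun (\<mu> n) (R k) < \<alpha> + e / 2" "\<rho>i \<le> R k"
          using K1[of k] unfolding n_def by auto
        have "ball (x k) (R k) \<inter> (UNIV - ball (x k) \<rho>) \<subseteq> ball (x k) (R k) - ball (x k) \<rho>i"
          using subset_ball[OF \<rho>_ge] by blast
        then have "emeasure (\<mu> n) (ball (x k) (R k) \<inter> (UNIV - ball (x k) \<rho>))
            \<le> emeasure (\<mu> n) (ball (x k) (R k) - ball (x k) \<rho>i)"
          using ball_sets by (intro emeasure_mono) auto
        also have "\<dots> = ennreal (measure (\<mu> n) (ball (x k) (R k) - ball (x k) \<rho>i))"
          using finite_measure.emeasure_eq_measure[OF fin] by blast
        also have "measure (\<mu> n) (ball (x k) (R k) - ball (x k) \<rho>i)
            = measure (\<mu> n) (ball (x k) (R k)) - measure (\<mu> n) (ball (x k) \<rho>i)"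
          using finite_measure.finite_measure_Diff[OF fin ball_sets ball_sets subset_ball[OF H(3)]] .
        also have "ennreal (measure (\<mu> n) (ball (x k) (R k)) - measure (\<mu> n) (ball (x k) \<rho>i)) < ennreal e"
        proof (rule ennreal_lessI[OF e])
          show "measure (\<mu> n) (ball (x k) (R k)) - measure (\<mu> n) (ball (x k) \<rho>i) < e"
            using H Qge[of n "x k" "R k"] i(2) by linarith
        qed
        finally show ?thesis .
      qed
      then show "emeasure (restrict_measure (\<mu> (r k)) (ball (x k) (R k)))
        (space (restrict_measure (\<mu> (r k)) (ball (x k) (R k))) - ball (x k) \<rho>) < ennreal e"
        using em spr unfolding n_def by simp
    qed
    then show "\<exists>RR>0. \<forall>k. emeasure (restrict_measure (\<mu> (r k)) (ball (x k) (R k)))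
        (space (restrict_measure (\<mu> (r k)) (ball (x k) (R k))) - ball (x k) RR) < ennreal e"
      using \<rho>_pos by blast
  qed
  show ?thesis
    apply (rule exI[of _ r], rule exI[of _ x], rule exI[of _ R])
    using r_mono R_pos R_lim conv conc by (auto simp: R_def)
qed

end
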